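(* Let $n\ge1$ and $u,v\in\mathcal S_n$. Then $u$ is strongly shift equivalent to $v$ if and only if $u\sim_{ss}v$.
   Context: $[n]=\{1,\ldots,n\}$; $\mathcal S_n$ is the set of permutations of $[n]$ as words. Rigid shift: for a word $u=u_1\cdots u_n$ over $\mathbb P$, an integer $h\ge0$ (cut height) and an integer $t$, suppose that for every $i$ with $u_i>h$ we have $1\le i+t\le n$ and $u_{i+t}\ge h$. Then the word $v$ with $v_j=\min(u_j,h)+\max(u_{j-t}-h,0)$ for $j\in[n]$ (the second term taken $0$ if $j-t\notin[n]$) is a rigid shift of $u$; geometrically, one cuts the skyline diagram of $u$ (columns of $u_i$ unit squares) at height $h$ and rigidly translates all squares above the cut horizontally by $t$ so each moved column rests on a column of height $h$. Two permutations are strongly shift equivalent if one can be obtained from the other by a finite sequence of rigid shifts. Super-strong Wilf equivalence: for finite words $u,w$ over $\mathbb P$, $j$ is an embedding index of $u$ in $w$ if $j+|u|-1\le|w|$ and $u_k\le w_{j+k-1}$ for all $k$; $Em(u,w)$ is the set of such $j$; $u\sim_{ss}v$ if there is a bijection $f$ of the set of finite words over $\mathbb P$ preserving length and sum of letters with $Em(u,w)=Em(v,f(w))$ for all $w$. *)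

theory Defs
  imports "HOL-Combinatorics.Multiset_Permutations"
begin

text \<open>Words over the positive integers are lists of naturals with all letters at least 1.
  Positions are 0-indexed in Isabelle lists; position i here corresponds to position i+1
  in the paper.\<close>

definition pos_words :: "nat list set" where
  "pos_words = {w. \<forall>x\<in>set w. 1 \<le> x}"

definition rigid_shift_ht :: "nat \<Rightarrow> int \<Rightarrow> nat list \<Rightarrow> nat list \<Rightarrow> bool" where
  "rigid_shift_ht h t u v \<longleftrightarrow>
     u \<in> pos_words \<and>
     (\<forall>i < length u. u ! i > h \<longrightarrow>
         0 \<le> int i + t \<and> int i + t < int (length u) \<and> u ! nat (int i + t) \<ge> h) \<and>
     length v = length u \<and>
     (\<forall>j < length u. v ! j = min (u ! j) h +
         (if 0 \<le> int j - t \<and> int j - t < int (length u)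
          then u ! nat (int j - t) - h else 0))"

definition rigid_shift :: "nat list \<Rightarrow> nat list \<Rightarrow> bool" where
  "rigid_shift u v \<longleftrightarrow> (\<exists>h t. rigid_shift_ht h t u v)"

definition strongly_shift_equiv :: "nat list \<Rightarrow> nat list \<Rightarrow> bool" where
  "strongly_shift_equiv u v \<longleftrightarrow> rigid_shift\<^sup>*\<^sup>* u v"

text \<open>Embedding indices (1-indexed as in the paper).\<close>

definition Em :: "nat list \<Rightarrow> nat list \<Rightarrow> nat set" where
  "Em u w = {j. 1 \<le> j \<and> j + length u - 1 \<le> length w \<and>
               (\<forall>k < length u. u ! k \<le> w ! (j + k - 1))}"

definition super_strong_wilf :: "nat list \<Rightarrow> nat list \<Rightarrow> bool" where
  "super_strong_wilf u v \<longleftrightarrow>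
     (\<exists>f. bij_betw f pos_words pos_words \<and>
          (\<forall>w\<in>pos_words. length (f w) = length w \<and> sum_list (f w) = sum_list w \<and>
                          Em u w = Em v (f w)))"

end

theory Submission
  imports Defs
begin


definition lev :: "nat list \<Rightarrow> nat \<Rightarrow> int set" where
  "lev u c = {x. 0 \<le> x \<and> x < int (length u) \<and> c \<le> u ! nat x}"

lemma shift_val:
  assumes "rigid_shift_ht h t u v" "j < length u"
  shows "u ! j < h \<Longrightarrow> v ! j = u ! j"
    and "h \<le> u ! j \<Longrightarrow> 0 \<le> int j - t \<and> int j - t < int (length u) \<and> h < u ! nat (int j - t) \<Longrightarrow> v ! j = u ! nat (int j - t)"
    and "\<not> (0 \<le> int j - t \<and> int j - t < int (length u) \<and> h < u ! nat (int j - t)) \<Longrightarrow> v ! j = min (u ! j) h"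
proof -
  have cond: "\<And>i. i < length u \<Longrightarrow> u ! i > h \<Longrightarrow> 0 \<le> int i + t \<and> int i + t < int (length u) \<and> u ! nat (int i + t) \<ge> h"
    and vj: "v ! j = min (u ! j) h + (if 0 \<le> int j - t \<and> int j - t < int (length u) then u ! nat (int j - t) - h else 0)"
    using assms unfolding rigid_shift_ht_def by auto
  show "u ! j < h \<Longrightarrow> v ! j = u ! j"
  proof -
    assume a: "u ! j < h"
    have "\<not> (0 \<le> int j - t \<and> int j - t < int (length u) \<and> h < u ! nat (int j - t))"
    proof
      assume b: "0 \<le> int j - t \<and> int j - t < int (length u) \<and> h < u ! nat (int j - t)"
      then have "u ! nat (int (nat (int j - t)) + t) \<ge> h" using cond[of "nat (int j - t)"] by auto
      moreover have "nat (int (nat (int j - t)) + t) = j" using b by auto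
      ultimately show False using a by simp
    qed
    then show ?thesis using vj a by auto
  qed
  show "h \<le> u ! j \<Longrightarrow> 0 \<le> int j - t \<and> int j - t < int (length u) \<and> h < u ! nat (int j - t) \<Longrightarrow> v ! j = u ! nat (int j - t)"
    using vj by auto
  show "\<not> (0 \<le> int j - t \<and> int j - t < int (length u) \<and> h < u ! nat (int j - t)) \<Longrightarrow> v ! j = min (u ! j) h"
    using vj by auto
qed

lemma shift_lev:
  assumes "rigid_shift_ht h t u v"
  shows "lev v c = (if c \<le> h then lev u c else (+) t ` lev u c)"
proof -
  have len: "length v = length u" using assms unfolding rigid_shift_ht_def by auto
  have cond: "\<And>i. i < length u \<Longrightarrow> u ! i > h \<Longrightarrow> 0 \<le> int i + t \<and> int i + t < int (length u) \<and> u ! nat (int i + t) \<ge> h"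
    using assms unfolding rigid_shift_ht_def by auto
  show ?thesis
  proof (cases "c \<le> h")
    case True
    have "c \<le> v ! j \<longleftrightarrow> c \<le> u ! j" if "j < length u" for j
    proof (cases "u ! j < h")
      case True then show ?thesis using shift_val(1)[OF assms that] by auto
    next
      case False
      then show ?thesis
        using shift_val(2,3)[OF assms that] \<open>c \<le> h\<close>
        by (cases "0 \<le> int j - t \<and> int j - t < int (length u) \<and> h < u ! nat (int j - t)") auto
    qed
    then show ?thesis using True len unfolding lev_def by force
  next
    case False
    have A: "c \<le> v ! j \<longleftrightarrow> (0 \<le> int j - t \<and> int j - t < int (length u) \<and> c \<le> u ! nat (int j - t))"
      if "j < length u" for j
    proof (cases "0 \<le> int j - t \<and> int j - t < int (length u) \<and> h < u ! nat (int j - t)")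
      case True
      have "h \<le> u ! j"
      proof -
        have "u ! nat (int (nat (int j - t)) + t) \<ge> h" using cond[of "nat (int j - t)"] True by auto
        moreover have "nat (int (nat (int j - t)) + t) = j" using True by auto
        ultimately show ?thesis by simp
      qed
      then show ?thesis using shift_val(2)[OF assms that] True by auto
    next
      case F: False
      then show ?thesis using shift_val(3)[OF assms that] False by auto
    qed
    show ?thesis
    proof -
      have "lev v c = {x. 0 \<le> x \<and> x < int (length u) \<and> 0 \<le> x - t \<and> x - t < int (length u) \<and> c \<le> u ! nat (x - t)}"
        unfolding lev_def len using A
        by (auto; metis int_nat_eq nat_less_iff) 
      also have "\<dots> = (+) t ` lev u c" (is "?S = _")
      proof
        show "(+) t ` lev u c \<subseteq> ?S"
        proof
          fix y assume "y \<in> (+) t ` lev u c"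
          then obtain x where x: "x \<in> lev u c" "y = t + x" by auto
          then have "0 \<le> x" "x < int (length u)" "c \<le> u ! nat x" unfolding lev_def by auto
          then have "int (nat x) + t = t + x" by auto
          moreover have "0 \<le> int (nat x) + t \<and> int (nat x) + t < int (length u)"
            using cond[of "nat x"] \<open>c \<le> u ! nat x\<close> False \<open>x < int (length u)\<close> \<open>0 \<le> x\<close> by auto
          ultimately show "y \<in> ?S" using x \<open>0 \<le> x\<close> \<open>x < int (length u)\<close> \<open>c \<le> u ! nat x\<close> by auto
        qed
        show "?S \<subseteq> (+) t ` lev u c"
        proof
          fix y assume "y \<in> {x. 0 \<le> x \<and> x < int (length u) \<and> 0 \<le> x - t \<and> x - t < int (length u) \<and> c \<le> u ! nat (x - t)}"
          then have "y - t \<in> lev u c" unfolding lev_def by auto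
          then show "y \<in> (+) t ` lev u c" by (auto intro: image_eqI[where x="y - t"])
        qed
      qed
      finally show ?thesis using False by simp
    qed
  qed
qed




definition levq :: "nat list \<Rightarrow> nat list \<Rightarrow> bool" where
  "levq u v \<longleftrightarrow> length u = length v \<and> (\<forall>c. \<exists>t. lev v c = (+) t ` lev u c)"

lemma levq_refl: "levq u u"
  unfolding levq_def by (auto intro!: exI[where x=0])

lemma levq_trans: "levq u v \<Longrightarrow> levq v w \<Longrightarrow> levq u w"
  unfolding levq_def
proof (intro conjI allI; elim conjE)
  fix c assume a: "\<forall>c. \<exists>t. lev v c = (+) t ` lev u c" and b: "\<forall>c. \<exists>t. lev w c = (+) t ` lev v c"
  obtain t1 where 1: "lev v c = (+) t1 ` lev u c" using a by blast
  obtain t2 where 2: "lev w c = (+) t2 ` lev v c" using b by blast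
  have "lev w c = (+) (t2 + t1) ` lev u c" unfolding 2 1 image_image by (simp add: add.assoc)
  then show "\<exists>t. lev w c = (+) t ` lev u c" by blast
qed auto

lemma levq_shift: "rigid_shift_ht h t u v \<Longrightarrow> levq u v"
  unfolding levq_def
proof (intro conjI allI)
  fix c assume a: "rigid_shift_ht h t u v"
  show "\<exists>t. lev v c = (+) t ` lev u c"
    using shift_lev[OF a, of c] by (cases "c \<le> h") (auto intro: exI[where x=0] exI[where x=t])
qed (auto simp: rigid_shift_ht_def)

lemma sse_levq: "strongly_shift_equiv u v \<Longrightarrow> levq u v"
  unfolding strongly_shift_equiv_def
proof (induction rule: rtranclp_induct)
  case base then show ?case by (rule levq_refl)
next
  case (step y z)
  then show ?case using levq_trans levq_shift unfolding rigid_shift_def by blast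
qed

lemma lev_pos: "w \<in> pos_words \<Longrightarrow> c \<le> 1 \<Longrightarrow> lev w c = {0..<int (length w)}"
  unfolding lev_def pos_words_def
  by (auto; metis nat_less_iff nth_mem le_trans)

lemma lev_mono: "c \<le> d \<Longrightarrow> lev w d \<subseteq> lev w c"
  unfolding lev_def by auto

lemma lev_eq_list:
  assumes "length w = length v" "\<And>c. lev w c = lev v c"
  shows "w = v"
proof (rule nth_equalityI)
  show "length w = length v" by fact
  fix i assume i: "i < length w"
  have "w ! i \<le> v ! i"
  proof -
    have "int i \<in> lev w (w ! i)" using i unfolding lev_def by auto
    then have "int i \<in> lev v (w ! i)" using assms(2) by simp
    then show ?thesis unfolding lev_def by auto
  qed
  moreover have "v ! i \<le> w ! i"
  proof -
    have "int i \<in> lev v (v ! i)" using i assms(1) unfolding lev_def by auto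
    then have "int i \<in> lev w (v ! i)" using assms(2) by simp
    then show ?thesis unfolding lev_def by auto
  qed
  ultimately show "w ! i = v ! i" by simp
qed

lemma exists_shift:
  assumes w: "w \<in> pos_words" and c: "1 \<le> c" and sub: "(+) t ` lev w (Suc c) \<subseteq> lev w c"
  shows "\<exists>w'. rigid_shift_ht c t w w' \<and> w' \<in> pos_words"
proof -
  define w' where "w' = map (\<lambda>j. min (w!j) c + (if 0 \<le> int j - t \<and> int j - t < int (length w) then w ! nat (int j - t) - c else 0)) [0..<length w]"
  have "rigid_shift_ht c t w w'"
    unfolding rigid_shift_ht_def
  proof (intro conjI allI impI)
    fix i assume i: "i < length w" "c < w ! i"
    then have "int i \<in> lev w (Suc c)" unfolding lev_def by auto
    then have "t + int i \<in> lev w c" using sub by auto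
    then show "0 \<le> int i + t" "int i + t < int (length w)" "c \<le> w ! nat (int i + t)"
      unfolding lev_def by (auto simp: add.commute)
  qed (auto simp: w w'_def)
  moreover have "w' \<in> pos_words"
  proof -
    have "\<And>j. j < length w \<Longrightarrow> 1 \<le> w ! j" using w unfolding pos_words_def by auto
    moreover have "\<And>a b (d::nat). 1 \<le> a \<Longrightarrow> 1 \<le> b \<Longrightarrow> 1 \<le> min a b + d" by auto
    ultimately show ?thesis using c unfolding w'_def pos_words_def by (auto simp: in_set_conv_nth)
  qed
  ultimately show ?thesis by blast
qed

lemma levq_sse:
  assumes u: "u \<in> pos_words" and v: "v \<in> pos_words" and q: "levq u v"
  shows "strongly_shift_equiv u v"
proof -
  have P: "\<exists>w. rigid_shift\<^sup>*\<^sup>* u w \<and> w \<in> pos_words \<and> length w = length v \<and>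
            (\<forall>c'. c' \<le> Suc k \<longrightarrow> lev w c' = lev v c') \<and> (\<forall>c'. \<exists>t. lev v c' = (+) t ` lev w c')" for k
  proof (induction k)
    case 0
    show ?case
      using u v q lev_pos[OF u] lev_pos[OF v] unfolding levq_def
      by (intro exI[where x=u]) auto
  next
    case (Suc k)
    then obtain w where w1: "rigid_shift\<^sup>*\<^sup>* u w" and w2: "w \<in> pos_words" and w3: "length w = length v"
      and w4: "\<forall>c'. c' \<le> Suc k \<longrightarrow> lev w c' = lev v c'" and w5: "\<forall>c'. \<exists>t. lev v c' = (+) t ` lev w c'"
      by blast
    define c where "c = Suc k"
    obtain t where t: "lev v (Suc c) = (+) t ` lev w (Suc c)" using w5 by blast
    have sub: "(+) t ` lev w (Suc c) \<subseteq> lev w c"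
      using t lev_mono[of c "Suc c" v] w4 c_def by auto
    obtain w' where s: "rigid_shift_ht c t w w'" and w'p: "w' \<in> pos_words"
      using exists_shift[OF w2 _ sub] c_def by auto
    have L: "lev w' d = (if d \<le> c then lev w d else (+) t ` lev w d)" for d
      using shift_lev[OF s] .
    show ?case
    proof (rule exI[where x=w'], intro conjI allI impI)
      show "rigid_shift\<^sup>*\<^sup>* u w'" using w1 s unfolding rigid_shift_def
        by (metis (mono_tags, lifting) rtranclp.rtrancl_into_rtrancl)
      show "w' \<in> pos_words" by fact
      show "length w' = length v" using s w3 unfolding rigid_shift_ht_def by auto
      fix d
      show "d \<le> Suc (Suc k) \<Longrightarrow> lev w' d = lev v d"
        using L[of d] w4 t c_def by (cases "d \<le> c") (auto simp: le_Suc_eq)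
      obtain s where s: "lev v d = (+) s ` lev w d" using w5 by blast
      show "\<exists>t'. lev v d = (+) t' ` lev w' d"
      proof (cases "d \<le> c")
        case True then show ?thesis using L[of d] s by auto
      next
        case False
        have "lev v d = (+) (s - t) ` lev w' d"
          using L[of d] False s by (simp add: image_image)
        then show ?thesis by blast
      qed
    qed
  qed
  obtain w where w1: "rigid_shift\<^sup>*\<^sup>* u w" and w3: "length w = length v"
      and w4: "\<forall>c'. c' \<le> Suc (sum_list v) \<longrightarrow> lev w c' = lev v c'" and w5: "\<forall>c'. \<exists>t. lev v c' = (+) t ` lev w c'"
    using P[of "sum_list v"] by blast
  have "lev w c' = lev v c'" for c'
  proof (cases "c' \<le> Suc (sum_list v)")
    case True then show ?thesis using w4 by auto
  next
    case False
    have "lev v c' = {}"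
    proof -
      have "\<And>i. i < length v \<Longrightarrow> v ! i \<le> sum_list v"
        by (simp add: elem_le_sum_list)
      then show ?thesis using False unfolding lev_def
        by (auto, metis le_trans nat_less_iff not_less_eq_eq le_SucI)
    qed
    moreover obtain t where "lev v c' = (+) t ` lev w c'" using w5 by blast
    ultimately show ?thesis by auto
  qed
  then have "w = v" using lev_eq_list[OF w3] by blast
  then show ?thesis using w1 unfolding strongly_shift_equiv_def by simp
qed




definition fib :: "nat list \<Rightarrow> nat \<Rightarrow> nat \<Rightarrow> nat set \<Rightarrow> nat list set" where
  "fib u l s S = {w \<in> pos_words. length w = l \<and> sum_list w = s \<and> Em u w = S}"

definition supw :: "nat list \<Rightarrow> nat \<Rightarrow> nat \<Rightarrow> nat set \<Rightarrow> nat list set" where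
  "supw u l s T = {w \<in> pos_words. length w = l \<and> sum_list w = s \<and> T \<subseteq> Em u w}"

lemma finite_ls: "finite {w :: nat list. length w = l \<and> sum_list w = s}"
proof (rule finite_subset)
  show "{w :: nat list. length w = l \<and> sum_list w = s} \<subseteq> {w. set w \<subseteq> {0..s} \<and> length w = l}"
    by (auto simp: member_le_sum_list)
  show "finite {w. set w \<subseteq> {0..s} \<and> length w = l}"
    by (rule finite_lists_length_eq) simp
qed

lemma finite_fib: "finite (fib u l s S)"
  by (rule finite_subset[OF _ finite_ls[of l s]]) (auto simp: fib_def)

lemma finite_sup: "finite (supw u l s S)"
  by (rule finite_subset[OF _ finite_ls[of l s]]) (auto simp: supw_def)

lemma Em_sub: "Em u w \<subseteq> {1..Suc (length w)}"
  unfolding Em_def by auto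

lemma glue:
  assumes "\<And>l s S. card (fib u l s S) = card (fib v l s S)"
  shows "super_strong_wilf u v"
proof -
  have "\<exists>g. bij_betw g (fib u l s S) (fib v l s S)" for l s S
    using assms[of l s S] finite_fib by (metis finite_same_card_bij)
  then obtain G where G: "\<And>l s S. bij_betw (G l s S) (fib u l s S) (fib v l s S)" by metis
  define f where "f w = G (length w) (sum_list w) (Em u w) w" for w
  have inF: "w \<in> fib u (length w) (sum_list w) (Em u w)" if "w \<in> pos_words" for w
    using that unfolding fib_def by auto
  have fw: "f w \<in> fib v (length w) (sum_list w) (Em u w)" if "w \<in> pos_words" for w
    using bij_betwE[OF G] inF[OF that] unfolding f_def by blast
  show ?thesis
    unfolding super_strong_wilf_def
  proof (intro exI conjI ballI)
    show "bij_betw f pos_words pos_words"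
    proof (rule bij_betw_imageI)
      show "inj_on f pos_words"
      proof
        fix x y assume x: "x \<in> pos_words" and y: "y \<in> pos_words" and e: "f x = f y"
        have kx: "length x = length y \<and> sum_list x = sum_list y \<and> Em u x = Em u y"
          using fw[OF x] fw[OF y] e unfolding fib_def by auto
        have "G (length x) (sum_list x) (Em u x) x = G (length x) (sum_list x) (Em u x) y"
          using e kx unfolding f_def by simp
        moreover have "y \<in> fib u (length x) (sum_list x) (Em u x)" using inF[OF y] kx by simp
        ultimately show "x = y" using inF[OF x] bij_betw_imp_inj_on[OF G] by (meson inj_onD)
      qed
      show "f ` pos_words = pos_words"
      proof
        show "f ` pos_words \<subseteq> pos_words" using fw unfolding fib_def by auto
        show "pos_words \<subseteq> f ` pos_words"
        proof
          fix y assume y: "y \<in> pos_words"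
          have "y \<in> fib v (length y) (sum_list y) (Em v y)" using y unfolding fib_def by auto
          then obtain x where x: "x \<in> fib u (length y) (sum_list y) (Em v y)" and
            xy: "G (length y) (sum_list y) (Em v y) x = y"
            using bij_betw_imp_surj_on[OF G] by (metis imageE)
          have "length x = length y" "sum_list x = sum_list y" "Em u x = Em v y" "x \<in> pos_words"
            using x unfolding fib_def by auto
          then have "f x = y" using xy unfolding f_def by simp
          then show "y \<in> f ` pos_words" using \<open>x \<in> pos_words\<close> by blast
        qed
      qed
    qed
    fix w assume w: "w \<in> pos_words"
    show "length (f w) = length w" "sum_list (f w) = sum_list w" "Em u w = Em v (f w)"
      using fw[OF w] unfolding fib_def by auto
  qed
qed

lemma ssw_card:
  assumes "super_strong_wilf u v"
  shows "card (fib u l s S) = card (fib v l s S)"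
proof -
  obtain f where b: "bij_betw f pos_words pos_words" and
    p: "\<And>w. w \<in> pos_words \<Longrightarrow> length (f w) = length w \<and> sum_list (f w) = sum_list w \<and> Em u w = Em v (f w)"
    using assms unfolding super_strong_wilf_def by blast
  have "f ` fib u l s S = fib v l s S"
  proof
    show "f ` fib u l s S \<subseteq> fib v l s S"
      using p bij_betwE[OF b] unfolding fib_def by auto
    show "fib v l s S \<subseteq> f ` fib u l s S"
    proof
      fix y assume y: "y \<in> fib v l s S"
      then have "y \<in> pos_words" unfolding fib_def by auto
      then obtain x where x: "x \<in> pos_words" "y = f x" using bij_betw_imp_surj_on[OF b] by blast
      then have "x \<in> fib u l s S" using p[OF x(1)] y unfolding fib_def by auto
      then show "y \<in> f ` fib u l s S" using x by blast
    qed
  qed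
  moreover have "inj_on f (fib u l s S)"
    using bij_betw_imp_inj_on[OF b] unfolding fib_def by (auto intro: inj_on_subset)
  ultimately show ?thesis by (metis card_image)
qed

lemma sup_as_sum:
  assumes "T \<subseteq> {1..Suc l}"
  shows "card (supw u l s T) = (\<Sum>S\<in>{S. T \<subseteq> S \<and> S \<subseteq> {1..Suc l}}. card (fib u l s S))"
proof -
  have "supw u l s T = (\<Union>S\<in>{S. T \<subseteq> S \<and> S \<subseteq> {1..Suc l}}. fib u l s S)"
    unfolding supw_def fib_def using Em_sub by fastforce
  moreover have "finite {S. T \<subseteq> S \<and> S \<subseteq> {1..Suc l}}" by (rule finite_subset[of _ "Pow {1..Suc l}"]) auto
  then have "card (\<Union>S\<in>{S. T \<subseteq> S \<and> S \<subseteq> {1..Suc l}}. fib u l s S) = (\<Sum>S\<in>{S. T \<subseteq> S \<and> S \<subseteq> {1..Suc l}}. card (fib u l s S))"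
    by (intro card_UN_disjoint) (auto simp: finite_fib, auto simp: fib_def)
  ultimately show ?thesis by simp
qed

lemma sup_card_from_fib:
  assumes "\<And>l s S. card (fib u l s S) = card (fib v l s S)"
  shows "card (supw u l s T) = card (supw v l s T)"
proof (cases "T \<subseteq> {1..Suc l}")
  case True then show ?thesis using sup_as_sum assms by presburger
next
  case False
  then have "supw u l s T = {}" "supw v l s T = {}" unfolding supw_def using Em_sub by fastforce+
  then show ?thesis by simp
qed

lemma fib_card_from_sup:
  assumes "\<And>T. card (supw u l s T) = card (supw v l s T)"
  shows "card (fib u l s S) = card (fib v l s S)"
proof (cases "S \<subseteq> {1..Suc l}")
  case False
  then have "fib u l s S = {}" "fib v l s S = {}" unfolding fib_def using Em_sub by fastforce+
  then show ?thesis by simp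
next
  case True
  define U where "U = {1..Suc l}"
  have "S \<subseteq> U \<Longrightarrow> card (fib u l s S) = card (fib v l s S)"
  proof (induction "card (U - S)" arbitrary: S rule: less_induct)
    case (less S)
    have fin: "finite {S'. S \<subset> S' \<and> S' \<subseteq> U}" by (rule finite_subset[of _ "Pow U"]) (auto simp: U_def)
    have split: "{S'. S \<subseteq> S' \<and> S' \<subseteq> U} = insert S {S'. S \<subset> S' \<and> S' \<subseteq> U}" using less.prems by auto
    have eq: "card (supw w l s S) = card (fib w l s S) + (\<Sum>S'\<in>{S'. S \<subset> S' \<and> S' \<subseteq> U}. card (fib w l s S'))" for w
      using sup_as_sum[of S l w s] less.prems unfolding U_def[symmetric] split
      by (simp add: fin)
    have "(\<Sum>S'\<in>{S'. S \<subset> S' \<and> S' \<subseteq> U}. card (fib u l s S')) = (\<Sum>S'\<in>{S'. S \<subset> S' \<and> S' \<subseteq> U}. card (fib v l s S'))"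
    proof (rule sum.cong[OF refl])
      fix S' assume S': "S' \<in> {S'. S \<subset> S' \<and> S' \<subseteq> U}"
      have "card (U - S') < card (U - S)"
        using S' by (intro psubset_card_mono) (auto simp: U_def)
      then show "card (fib u l s S') = card (fib v l s S')" using less.hyps S' by auto
    qed
    then show ?case using eq[of u] eq[of v] assms[of S] by linarith
  qed
  then show ?thesis using True U_def by blast
qed




definition mbset :: "nat list \<Rightarrow> nat set \<Rightarrow> nat \<Rightarrow> nat set" where
  "mbset u T p = insert 1 {u ! (p + 1 - j) | j. j \<in> T \<and> j \<le> p + 1 \<and> p + 1 - j < length u}"

definition mb :: "nat list \<Rightarrow> nat set \<Rightarrow> nat \<Rightarrow> nat" where
  "mb u T p = Max (mbset u T p)"

definition Vl :: "nat list \<Rightarrow> nat \<Rightarrow> nat set" where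
  "Vl u l = {j. 1 \<le> j \<and> j + length u - 1 \<le> l}"

lemma finite_mbset: "finite (mbset u T p)"
proof -
  have "mbset u T p \<subseteq> insert 1 (set u)" unfolding mbset_def by auto
  then show ?thesis by (rule finite_subset) simp
qed

lemma mb_ge1: "1 \<le> mb u T p"
  unfolding mb_def using finite_mbset by (simp add: mbset_def)

lemma mb_ge_iff: "c \<le> mb u T p \<longleftrightarrow> c \<le> 1 \<or> (\<exists>j\<in>T. j \<le> p + 1 \<and> p + 1 - j < length u \<and> c \<le> u ! (p + 1 - j))"
  unfolding mb_def using finite_mbset[of u T p]
  by (subst Max_ge_iff) (auto simp: mbset_def)

lemma Em_sup_iff:
  assumes w: "w \<in> pos_words" and l: "length w = l" and T: "T \<subseteq> Vl u l"
  shows "T \<subseteq> Em u w \<longleftrightarrow> (\<forall>p<l. mb u T p \<le> w ! p)"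
proof
  assume a: "T \<subseteq> Em u w"
  show "\<forall>p<l. mb u T p \<le> w ! p"
  proof (intro allI impI)
    fix p assume p: "p < l"
    have "1 \<le> w ! p" using w p l unfolding pos_words_def by auto
    moreover have "u ! (p + 1 - j) \<le> w ! p" if "j \<in> T" "j \<le> p + 1" "p + 1 - j < length u" for j
    proof -
      have "j \<in> Em u w" using a that by auto
      then have "u ! (p + 1 - j) \<le> w ! (j + (p + 1 - j) - 1)" unfolding Em_def using that by auto
      moreover have "j + (p + 1 - j) - 1 = p" using that by auto
      ultimately show ?thesis by simp
    qed
    ultimately show "mb u T p \<le> w ! p"
      unfolding mb_def using finite_mbset by (subst Max_le_iff) (auto simp: mbset_def)
  qed
next
  assume a: "\<forall>p<l. mb u T p \<le> w ! p"
  show "T \<subseteq> Em u w"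
  proof
    fix j assume j: "j \<in> T"
    then have j1: "1 \<le> j" "j + length u - 1 \<le> l" using T unfolding Vl_def by auto
    have "u ! k \<le> w ! (j + k - 1)" if k: "k < length u" for k
    proof -
      define p where "p = j + k - 1"
      have pl: "p < l" using j1 k unfolding p_def by auto
      have pj: "p + 1 - j = k" using j1 unfolding p_def by auto
      have "u ! (p + 1 - j) \<le> mb u T p" unfolding mb_ge_iff
        using j j1 k pj by (intro disjI2 bexI[of _ j]) (auto simp: p_def)
      moreover note pj
      ultimately show ?thesis using a pl unfolding p_def by fastforce
    qed
    then show "j \<in> Em u w" unfolding Em_def using j1 l by auto
  qed
qed

lemma sup_char:
  assumes T: "T \<subseteq> Vl u l"
  shows "supw u l s T = {w. length w = l \<and> sum_list w = s \<and> (\<forall>p<l. mb u T p \<le> w ! p)}"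
proof -
  have "w \<in> pos_words" if "length w = l" "\<forall>p<l. mb u T p \<le> w ! p" for w
    using that mb_ge1[of u T] unfolding pos_words_def
    by (auto simp: in_set_conv_nth) (metis le_trans)
  then show ?thesis unfolding supw_def using Em_sup_iff[OF _ _ T] by blast
qed

lemma bounded_card_le:
  fixes b b' :: "nat list"
  assumes "length b = l" "length b' = l" "sum_list b = sum_list b'"
  shows "card {w. length w = l \<and> sum_list w = s \<and> (\<forall>p<l. b ! p \<le> w ! p)}
      \<le> card {w. length w = l \<and> sum_list w = s \<and> (\<forall>p<l. b' ! p \<le> w ! p)}"
proof -
  define F where "F w = map (\<lambda>p. w ! p - b ! p + b' ! p) [0..<l]" for w
  let ?A = "{w. length w = l \<and> sum_list w = s \<and> (\<forall>p<l. b ! p \<le> w ! p)}"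
  let ?B = "{w. length w = l \<and> sum_list w = s \<and> (\<forall>p<l. b' ! p \<le> w ! p)}"
  have "F ` ?A \<subseteq> ?B"
  proof
    fix y assume "y \<in> F ` ?A"
    then obtain w where w: "w \<in> ?A" "y = F w" by blast
    have "sum_list (F w) + sum_list b = sum_list w + sum_list b'"
    proof -
      have "sum_list (F w) + sum_list b = (\<Sum>p\<in>{0..<l}. (w ! p - b ! p + b' ! p) + b ! p)"
        unfolding F_def using assms(1) by (simp add: interv_sum_list_conv_sum_set_nat sum_list_sum_nth sum.distrib)
      also have "\<dots> = (\<Sum>p\<in>{0..<l}. w ! p + b' ! p)"
        using w(1) by (intro sum.cong) auto
      also have "\<dots> = sum_list w + sum_list b'"
        using w(1) assms(2) by (simp add: sum_list_sum_nth sum.distrib)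
      finally show ?thesis .
    qed
    then have "sum_list (F w) = s" using w(1) assms(3) by simp
    then show "y \<in> ?B" using w unfolding F_def by auto
  qed
  moreover have "inj_on F ?A"
  proof
    fix x y assume x: "x \<in> ?A" and y: "y \<in> ?A" and e: "F x = F y"
    show "x = y"
    proof (rule nth_equalityI)
      show "length x = length y" using x y by simp
      fix i assume i: "i < length x"
      have "F x ! i = F y ! i" using e by simp
      moreover have "length x = l" using x by simp
      ultimately have "x ! i - b ! i + b' ! i = y ! i - b ! i + b' ! i" using i unfolding F_def by simp
      moreover have "b ! i \<le> x ! i" "b ! i \<le> y ! i" using i x y by auto
      ultimately show "x ! i = y ! i" by linarith
    qed
  qed
  moreover have "finite ?B" by (rule finite_subset[OF _ finite_ls[of l s]]) auto
  ultimately show ?thesis by (meson card_inj_on_le)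
qed

lemma bounded_card_eq:
  fixes b b' :: "nat list"
  assumes "length b = l" "length b' = l" "sum_list b = sum_list b'"
  shows "card {w. length w = l \<and> sum_list w = s \<and> (\<forall>p<l. b ! p \<le> w ! p)}
      = card {w. length w = l \<and> sum_list w = s \<and> (\<forall>p<l. b' ! p \<le> w ! p)}"
  using bounded_card_le[OF assms, of s] bounded_card_le[OF assms(2,1) assms(3)[symmetric], of s] by simp

definition bnd :: "nat list \<Rightarrow> nat set \<Rightarrow> nat \<Rightarrow> nat list" where
  "bnd u T l = map (mb u T) [0..<l]"

lemma sup_bnd:
  assumes T: "T \<subseteq> Vl u l"
  shows "supw u l s T = {w. length w = l \<and> sum_list w = s \<and> (\<forall>p<l. bnd u T l ! p \<le> w ! p)}"
  unfolding sup_char[OF T] bnd_def by auto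

lemma sum_bnd: "sum_list (bnd u T l) = (\<Sum>p<l. mb u T p)"
  unfolding bnd_def by (simp add: interv_sum_list_conv_sum_set_nat atLeast0LessThan)




lemma card_filter_sum: "finite A \<Longrightarrow> card {x\<in>A. P x} = (\<Sum>x\<in>A. if P x then 1 else (0::nat))"
  by (simp add: sum.inter_filter[symmetric])

lemma level_union:
  assumes T: "T \<subseteq> Vl u l" and c: "2 \<le> c"
  shows "(\<Union>j\<in>T. (+) (int j - 1) ` lev u c) = int ` {p\<in>{..<l}. c \<le> mb u T p}"
proof
  show "(\<Union>j\<in>T. (+) (int j - 1) ` lev u c) \<subseteq> int ` {p\<in>{..<l}. c \<le> mb u T p}"
  proof
    fix x assume "x \<in> (\<Union>j\<in>T. (+) (int j - 1) ` lev u c)"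
    then obtain j y where j: "j \<in> T" and y: "y \<in> lev u c" and x: "x = int j - 1 + y" by blast
    have j1: "1 \<le> j" "j + length u - 1 \<le> l" using T j unfolding Vl_def by auto
    have y1: "0 \<le> y" "y < int (length u)" "c \<le> u ! nat y" using y unfolding lev_def by auto
    define p where "p = nat x"
    have px: "int p = x" using x j1 y1 unfolding p_def by auto
    have pl: "p < l" using px x j1 y1 by linarith
    have "p + 1 - j = nat y" using px x j1 y1 by linarith
    moreover have "j \<le> p + 1" using px x j1 y1 by linarith
    ultimately have "c \<le> mb u T p" unfolding mb_ge_iff using j y1 by (intro disjI2 bexI[of _ j]) auto
    then show "x \<in> int ` {p\<in>{..<l}. c \<le> mb u T p}" using pl px by force
  qed
  show "int ` {p\<in>{..<l}. c \<le> mb u T p} \<subseteq> (\<Union>j\<in>T. (+) (int j - 1) ` lev u c)"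
  proof
    fix x assume "x \<in> int ` {p\<in>{..<l}. c \<le> mb u T p}"
    then obtain p where p: "p < l" "c \<le> mb u T p" "x = int p" by blast
    then obtain j where j: "j \<in> T" "j \<le> p + 1" "p + 1 - j < length u" "c \<le> u ! (p + 1 - j)"
      using c unfolding mb_ge_iff by auto
    have "int (p + 1 - j) \<in> lev u c" unfolding lev_def mem_Collect_eq nat_int using j by simp
    moreover have "x = int j - 1 + int (p + 1 - j)" using j p by auto
    ultimately show "x \<in> (\<Union>j\<in>T. (+) (int j - 1) ` lev u c)" using j by blast
  qed
qed

lemma sum_mb_levels:
  assumes T: "T \<subseteq> Vl u l" and N: "\<forall>i<length u. u!i \<le> N" "1 \<le> N"
  shows "(\<Sum>p<l. mb u T p) = l + (\<Sum>c\<in>{2..N}. card (\<Union>j\<in>T. (+) (int j - 1) ` lev u c))"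
proof -
  have le: "mb u T p \<le> N" for p
    unfolding mb_def using finite_mbset[of u T p] N
    by (subst Max_le_iff) (auto simp: mbset_def)
  have cm: "mb u T p = (\<Sum>c\<in>{1..N}. if c \<le> mb u T p then 1 else 0)" for p
  proof -
    have "{c\<in>{1..N}. c \<le> mb u T p} = {1..mb u T p}" using le[of p] by auto
    then have "mb u T p = card {c\<in>{1..N}. c \<le> mb u T p}" by simp
    then show ?thesis by (simp only: card_filter_sum[OF finite_atLeastAtMost])
  qed
  have "(\<Sum>p<l. mb u T p) = (\<Sum>p<l. \<Sum>c\<in>{1..N}. if c \<le> mb u T p then 1 else 0)"
    by (rule sum.cong[OF refl]) (rule cm)
  also have "\<dots> = (\<Sum>c\<in>{1..N}. \<Sum>p<l. if c \<le> mb u T p then 1 else 0)"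
    by (rule sum.swap)
  also have "\<dots> = (\<Sum>c\<in>{1..N}. card {p\<in>{..<l}. c \<le> mb u T p})"
    by (rule sum.cong[OF refl]) (simp only: card_filter_sum[OF finite_lessThan])
  also have "\<dots> = card {p\<in>{..<l}. 1 \<le> mb u T p} + (\<Sum>c\<in>{2..N}. card {p\<in>{..<l}. c \<le> mb u T p})"
  proof -
    have "{1..N} = insert 1 {2..N}" using N by auto
    then show ?thesis by simp
  qed
  also have "card {p\<in>{..<l}. 1 \<le> mb u T p} = l" using mb_ge1[of u T] by simp
  also have "(\<Sum>c\<in>{2..N}. card {p\<in>{..<l}. c \<le> mb u T p}) = (\<Sum>c\<in>{2..N}. card (\<Union>j\<in>T. (+) (int j - 1) ` lev u c))"
  proof (rule sum.cong[OF refl])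
    fix c assume "c \<in> {2..N}"
    then show "card {p\<in>{..<l}. c \<le> mb u T p} = card (\<Union>j\<in>T. (+) (int j - 1) ` lev u c)"
      using level_union[OF T, of c] by (simp add: card_image)
  qed
  finally show ?thesis .
qed

lemma card_union_translate:
  assumes "lev v c = (+) t ` lev u c"
  shows "card (\<Union>j\<in>T. (+) (a j) ` lev v c) = card (\<Union>j\<in>T. (+) (a j) ` lev u c)"
proof -
  have "(\<Union>j\<in>T. (+) (a j) ` lev v c) = (+) t ` (\<Union>j\<in>T. (+) (a j) ` lev u c)"
    unfolding assms by (auto simp: image_image add_ac image_UN)
  then show ?thesis by (simp add: card_image)
qed

lemma levq_ssw:
  assumes q: "levq u v"
  shows "super_strong_wilf u v"
proof (rule glue)
  fix l s S
  have len: "length u = length v" using q unfolding levq_def by simp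
  define N where "N = Suc (sum_list u + sum_list v)"
  have Nu: "\<forall>i<length u. u!i \<le> N" and Nv: "\<forall>i<length v. v!i \<le> N" and N1: "1 \<le> N"
    unfolding N_def by (auto simp: elem_le_sum_list le_SucI trans_le_add1 trans_le_add2)
  have "card (supw u l s T) = card (supw v l s T)" for T
  proof (cases "T \<subseteq> Vl u l")
    case False
    then have "\<not> T \<subseteq> Vl v l" using len unfolding Vl_def by simp
    have "supw w l s T = {}" if "\<not> T \<subseteq> Vl w l" for w
      using that unfolding supw_def Em_def Vl_def by auto
    then show ?thesis using False \<open>\<not> T \<subseteq> Vl v l\<close> by simp
  next
    case True
    then have Tv: "T \<subseteq> Vl v l" using len unfolding Vl_def by simp
    have "(\<Sum>p<l. mb u T p) = (\<Sum>p<l. mb v T p)"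
      unfolding sum_mb_levels[OF True Nu N1] sum_mb_levels[OF Tv Nv N1]
    proof (intro arg_cong2[where f="(+)"] refl sum.cong)
      fix c
      obtain t where "lev v c = (+) t ` lev u c" using q unfolding levq_def by blast
      then show "card (\<Union>j\<in>T. (+) (int j - 1) ` lev u c) = card (\<Union>j\<in>T. (+) (int j - 1) ` lev v c)"
        using card_union_translate[where T=T and a="\<lambda>j. int j - 1"] by simp
    qed
    then have "sum_list (bnd u T l) = sum_list (bnd v T l)" by (simp add: sum_bnd)
    then show ?thesis unfolding sup_bnd[OF True] sup_bnd[OF Tv]
      by (intro bounded_card_eq) (auto simp: bnd_def)
  qed
  then show "card (fib u l s S) = card (fib v l s S)" by (rule fib_card_from_sup)
qed




lemma sum_le_pointwise:
  fixes a b :: "nat list"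
  assumes "length a = l" "length b = l" "\<forall>p<l. a ! p \<le> b ! p"
  shows "sum_list a \<le> sum_list b"
  using assms by (simp add: sum_list_sum_nth) (rule sum_mono, simp)

lemma ssw_summb:
  assumes ss: "super_strong_wilf u v" and len: "length u = length v" and T: "T \<subseteq> Vl u l"
  shows "(\<Sum>p<l. mb u T p) = (\<Sum>p<l. mb v T p)"
proof -
  have eqc: "card (supw u l s T') = card (supw v l s T')" for s T'
    by (rule sup_card_from_fib) (rule ssw_card[OF ss])
  have Tv: "T \<subseteq> Vl v l" using T len unfolding Vl_def by simp
  have dir: "(\<Sum>p<l. mb y T p) \<le> (\<Sum>p<l. mb x T p)"
    if T1: "T \<subseteq> Vl x l" and T2: "T \<subseteq> Vl y l"
      and e: "card (supw x l (\<Sum>p<l. mb x T p) T) = card (supw y l (\<Sum>p<l. mb x T p) T)" for x y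
  proof -
    let ?s = "\<Sum>p<l. mb x T p"
    have "bnd x T l \<in> supw x l ?s T" unfolding sup_bnd[OF T1] by (auto simp: bnd_def sum_bnd[unfolded bnd_def])
    then have "card (supw x l ?s T) \<noteq> 0" using finite_sup by (metis card_0_eq empty_iff)
    then have "supw y l ?s T \<noteq> {}" using e by auto
    then obtain w where w: "length w = l" "sum_list w = ?s" "\<forall>p<l. bnd y T l ! p \<le> w ! p"
      unfolding sup_bnd[OF T2] by blast
    have "sum_list (bnd y T l) \<le> sum_list w"
      by (rule sum_le_pointwise[OF _ w(1) w(3)]) (simp add: bnd_def)
    then show ?thesis using w(2) by (simp add: sum_bnd)
  qed
  show ?thesis using dir[OF T Tv eqc] dir[OF Tv T eqc[symmetric]] by simp
qed

definition Phi :: "nat list \<Rightarrow> nat \<Rightarrow> int set \<Rightarrow> nat" where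
  "Phi u N K = (\<Sum>c\<in>{2..N}. card (\<Union>x\<in>K. (+) x ` lev u c))"

lemma ssw_Phi:
  assumes ss: "super_strong_wilf u v" and len: "length u = length v"
    and Nu: "\<forall>i<length u. u!i \<le> N" and Nv: "\<forall>i<length v. v!i \<le> N" and N1: "1 \<le> N"
    and K: "finite K" "\<forall>x\<in>K. 0 \<le> x"
  shows "Phi u N K = Phi v N K"
proof -
  define T where "T = (\<lambda>x. nat x + 1) ` K"
  define l where "l = (\<Sum>x\<in>K. nat x) + length u"
  have T: "T \<subseteq> Vl u l"
  proof
    fix j assume "j \<in> T"
    then obtain x where x: "x \<in> K" "j = nat x + 1" unfolding T_def by blast
    have "nat x \<le> (\<Sum>x\<in>K. nat x)" using K x by (intro member_le_sum) auto
    then show "j \<in> Vl u l" unfolding Vl_def l_def using x by auto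
  qed
  have U: "(\<Union>j\<in>T. (+) (int j - 1) ` lev w c) = (\<Union>x\<in>K. (+) x ` lev w c)" for w c
    unfolding T_def using K(2) by auto
  have "(\<Sum>p<l. mb u T p) = (\<Sum>p<l. mb v T p)" by (rule ssw_summb[OF ss len T])
  moreover have "T \<subseteq> Vl v l" using T len unfolding Vl_def by simp
  ultimately show ?thesis
    using sum_mb_levels[OF T Nu N1] sum_mb_levels[OF _ Nv N1, of T l] unfolding Phi_def U
    by simp
qed




lemma incl_excl_inter:
  fixes A :: "'a \<Rightarrow> 'b set"
  assumes K: "finite K" "K \<noteq> {}" and fin: "\<forall>j\<in>K. finite (A j)"
  shows "int (card (\<Inter>j\<in>K. A j)) = (\<Sum>B | B \<subseteq> K \<and> B \<noteq> {}. (-1)^(card B + 1) * int (card (\<Union>j\<in>B. A j)))"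
proof -
  have loc1: "Incl_Excl (finite :: 'b set \<Rightarrow> bool) (int o card)"
    by (standard; auto simp add: card_Un_disjnt)
  have loc2: "Incl_Excl (finite :: int set \<Rightarrow> bool) (int o card)"
    by (standard; auto simp add: card_Un_disjnt)
  define U where "U = (\<Union>j\<in>K. A j)"
  have fU: "finite U" using K fin unfolding U_def by auto
  have one: "(\<Sum>B | B \<subseteq> K \<and> B \<noteq> {}. (-1)^(card B + 1) * (1::int)) = 1"
  proof -
    have "(int o card) (\<Union>((\<lambda>j. {0::int}) ` K)) = (\<Sum>B | B \<subseteq> K \<and> B \<noteq> {}. (- 1) ^ (card B + 1) * (int o card) (\<Inter> ((\<lambda>j. {0::int}) ` B)))"
      by (rule Incl_Excl.restricted_indexed[OF loc2]) (use K in auto)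
    moreover have "\<Union>((\<lambda>j. {0::int}) ` K) = {0}" using K by auto
    moreover have "\<And>B. B \<noteq> {} \<Longrightarrow> \<Inter> ((\<lambda>j. {0::int}) ` B) = {0}" by auto
    ultimately have "1 = (\<Sum>B | B \<subseteq> K \<and> B \<noteq> {}. (- 1) ^ (card B + 1) * (int o card) (\<Inter> ((\<lambda>j. {0::int}) ` B)))"
      by simp
    also have "\<dots> = (\<Sum>B | B \<subseteq> K \<and> B \<noteq> {}. (-1)^(card B + 1) * (1::int))"
      by (intro sum.cong refl) (auto simp: \<open>\<And>B. B \<noteq> {} \<Longrightarrow> \<Inter> ((\<lambda>j. {0::int}) ` B) = {0}\<close>)
    finally show ?thesis by simp
  qed
  have R: "(int o card) (\<Union>((\<lambda>j. U - A j) ` K)) = (\<Sum>B | B \<subseteq> K \<and> B \<noteq> {}. (- 1) ^ (card B + 1) * (int o card) (\<Inter> ((\<lambda>j. U - A j) ` B)))"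
    by (rule Incl_Excl.restricted_indexed[OF loc1]) (use K fU in auto)
  have e1: "\<Union>((\<lambda>j. U - A j) ` K) = U - (\<Inter>j\<in>K. A j)" using K by auto
  have s1: "(\<Inter>j\<in>K. A j) \<subseteq> U" using K unfolding U_def by auto
  have L: "(int o card) (\<Union>((\<lambda>j. U - A j) ` K)) = int (card U) - int (card (\<Inter>j\<in>K. A j))"
    unfolding e1 using s1 fU by (simp add: card_Diff_subset finite_subset card_mono of_nat_diff)
  have M: "(\<Sum>B | B \<subseteq> K \<and> B \<noteq> {}. (- 1) ^ (card B + 1) * (int o card) (\<Inter> ((\<lambda>j. U - A j) ` B)))
     = (\<Sum>B | B \<subseteq> K \<and> B \<noteq> {}. (- 1) ^ (card B + 1) * (int (card U) - int (card (\<Union>j\<in>B. A j))))"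
  proof (rule sum.cong[OF refl])
    fix B assume B: "B \<in> {B. B \<subseteq> K \<and> B \<noteq> {}}"
    have e: "\<Inter> ((\<lambda>j. U - A j) ` B) = U - (\<Union>j\<in>B. A j)" using B by auto
    have s: "(\<Union>j\<in>B. A j) \<subseteq> U" using B unfolding U_def by auto
    show "(- 1) ^ (card B + 1) * (int o card) (\<Inter> ((\<lambda>j. U - A j) ` B)) = (- 1) ^ (card B + 1) * (int (card U) - int (card (\<Union>j\<in>B. A j)))"
      unfolding e using s fU by (simp add: card_Diff_subset finite_subset card_mono of_nat_diff)
  qed
  have "int (card U) - int (card (\<Inter>j\<in>K. A j)) = (\<Sum>B | B \<subseteq> K \<and> B \<noteq> {}. (- 1) ^ (card B + 1) * (int (card U) - int (card (\<Union>j\<in>B. A j))))"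
    using R L M by simp
  also have "\<dots> = int (card U) * (\<Sum>B | B \<subseteq> K \<and> B \<noteq> {}. (-1)^(card B + 1) * (1::int))
      - (\<Sum>B | B \<subseteq> K \<and> B \<noteq> {}. (-1)^(card B + 1) * int (card (\<Union>j\<in>B. A j)))"
    by (simp add: sum_distrib_left right_diff_distrib sum_subtractf sum_negf mult_ac)
  finally show ?thesis unfolding one by simp
qed

definition Psi :: "nat list \<Rightarrow> nat \<Rightarrow> int set \<Rightarrow> int" where
  "Psi u N K = (\<Sum>c\<in>{2..N}. int (card (\<Inter>x\<in>K. (+) x ` lev u c)))"

lemma finite_lev: "finite (lev u c)"
  by (rule finite_subset[of _ "{0..<int (length u)}"]) (auto simp: lev_def)

lemma Psi_Phi:
  assumes K: "finite K" "K \<noteq> {}"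
  shows "Psi u N K = (\<Sum>B | B \<subseteq> K \<and> B \<noteq> {}. (-1)^(card B + 1) * int (Phi u N B))"
proof -
  have "Psi u N K = (\<Sum>c\<in>{2..N}. \<Sum>B | B \<subseteq> K \<and> B \<noteq> {}. (-1)^(card B + 1) * int (card (\<Union>x\<in>B. (+) x ` lev u c)))"
    unfolding Psi_def by (intro sum.cong refl incl_excl_inter K) (auto simp: finite_lev)
  also have "\<dots> = (\<Sum>B | B \<subseteq> K \<and> B \<noteq> {}. \<Sum>c\<in>{2..N}. (-1)^(card B + 1) * int (card (\<Union>x\<in>B. (+) x ` lev u c)))"
    by (rule sum.swap)
  also have "\<dots> = (\<Sum>B | B \<subseteq> K \<and> B \<noteq> {}. (-1)^(card B + 1) * int (Phi u N B))"
    unfolding Phi_def by (simp add: sum_distrib_left)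
  finally show ?thesis .
qed

lemma Psi_eq:
  assumes K: "finite K" "K \<noteq> {}" and P: "\<And>B. B \<subseteq> K \<Longrightarrow> B \<noteq> {} \<Longrightarrow> Phi u N B = Phi v N B"
  shows "Psi u N K = Psi v N K"
  unfolding Psi_Phi[OF K] using P by (intro sum.cong) auto




lemma perm_facts:
  assumes "u \<in> permutations_of_set {1..n}"
  shows "distinct u" "set u = {1..n}" "length u = n" "u \<in> pos_words" "\<forall>i<length u. u ! i \<le> n"
proof -
  show d: "distinct u" and s: "set u = {1..n}" using assms unfolding permutations_of_set_def by auto
  show "length u = n" using distinct_card[OF d] s by simp
  show "u \<in> pos_words" using s unfolding pos_words_def by auto
  show "\<forall>i<length u. u ! i \<le> n" using s nth_mem by fastforce
qed

lemma card_lev_perm: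
  assumes "u \<in> permutations_of_set {1..n}" "1 \<le> c"
  shows "card (lev u c) = n + 1 - c"
proof -
  note pf = perm_facts[OF assms(1)]
  have "lev u c = int ` {i. i < n \<and> c \<le> u ! i}"
    unfolding lev_def pf(3)[symmetric] by (auto simp: image_iff) (rule_tac x="nat x" in exI, auto)
  then have "card (lev u c) = card {i. i < n \<and> c \<le> u ! i}" by (simp add: card_image)
  also have "\<dots> = card ((!) u ` {i. i < n \<and> c \<le> u ! i})"
    using pf(1,3) by (intro card_image[symmetric] inj_on_subset[OF inj_on_nth[of u "{..<length u}"]]) auto
  also have "(!) u ` {i. i < n \<and> c \<le> u ! i} = {c..n}"
  proof
    show "(!) u ` {i. i < n \<and> c \<le> u ! i} \<subseteq> {c..n}" using pf(2,3) nth_mem by fastforce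
    show "{c..n} \<subseteq> (!) u ` {i. i < n \<and> c \<le> u ! i}"
    proof
      fix x assume "x \<in> {c..n}"
      then have "x \<in> set u" using pf(2) assms(2) by auto
      then obtain i where "i < length u" "u ! i = x" by (metis in_set_conv_nth)
      then show "x \<in> (!) u ` {i. i < n \<and> c \<le> u ! i}" using \<open>x \<in> {c..n}\<close> pf(3) by auto
    qed
  qed
  finally show ?thesis by simp
qed

lemma mem_plus_image: "y \<in> (+) x ` (L::int set) \<longleftrightarrow> y - x \<in> L"
  by (auto intro: image_eqI[where x="y - x"])

lemma inter_char: "(\<Inter>x\<in>K. (+) x ` (L::int set)) = {y. \<forall>x\<in>K. y - x \<in> L}"
  by (auto simp: mem_plus_image)

lemma cnt_translate: "card (\<Inter>x\<in>K. (+) x ` ((+) t ` (L::int set))) = card (\<Inter>x\<in>K. (+) x ` L)"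
proof -
  have "(\<Inter>x\<in>K. (+) x ` ((+) t ` L)) = (+) t ` (\<Inter>x\<in>K. (+) x ` L)"
    unfolding inter_char by (rule set_eqI) (simp only: mem_plus_image mem_Collect_eq diff_diff_eq add.commute)
  then show ?thesis by (simp add: card_image)
qed

lemma cnt_small:
  assumes "finite L" "finite K" "card L < card K"
  shows "card (\<Inter>x\<in>K. (+) x ` (L::int set)) = 0"
proof -
  have "(\<Inter>x\<in>K. (+) x ` L) = {}"
  proof (rule ccontr)
    assume "(\<Inter>x\<in>K. (+) x ` L) \<noteq> {}"
    then obtain y where "\<forall>x\<in>K. y - x \<in> L" unfolding inter_char by auto
    then have "(\<lambda>x. y - x) ` K \<subseteq> L" by auto
    moreover have "inj_on (\<lambda>x. y - x) K" by (auto simp: inj_on_def)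
    ultimately have "card K \<le> card L" using assms(1) by (metis card_image card_mono)
    then show False using assms(3) by simp
  qed
  then show ?thesis by simp
qed




lemma perm_levq:
  assumes u: "u \<in> permutations_of_set {1..n}" and v: "v \<in> permutations_of_set {1..n}"
    and hyp: "\<And>K. finite K \<Longrightarrow> K \<noteq> {} \<Longrightarrow> (\<forall>x\<in>K. 0 \<le> x) \<Longrightarrow> Psi u n K = Psi v n K"
  shows "levq u v"
proof -
  note pu = perm_facts[OF u] and pv = perm_facts[OF v]
  have "\<exists>t. lev v c = (+) t ` lev u c" for c
  proof (induction c rule: less_induct)
    case (less c)
    show ?case
    proof (cases "c \<le> 1")
      case True
      then show ?thesis using lev_pos[OF pu(4) True] lev_pos[OF pv(4) True] pu(3) pv(3)
        by (intro exI[of _ 0]) auto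
    next
      case c1: False
      show ?thesis
      proof (cases "n < c")
        case True
        have "card (lev u c) = 0" "card (lev v c) = 0" using card_lev_perm[OF u] card_lev_perm[OF v] c1 True by auto
        then have "lev u c = {}" "lev v c = {}" using finite_lev by auto
        then show ?thesis by auto
      next
        case False
        then have c2: "c \<in> {2..n}" using c1 by auto
        define K where "K = (\<lambda>y. int n - y) ` lev u c"
        have cardK: "card K = n + 1 - c"
          unfolding K_def using card_lev_perm[OF u] c1 by (subst card_image) (auto simp: inj_on_def)
        have finK: "finite K" unfolding K_def using finite_lev by auto
        have Kne: "K \<noteq> {}" using cardK c2 by auto
        have Kpos: "\<forall>x\<in>K. 0 \<le> x" unfolding K_def lev_def pu(3) by auto
        define cnt where "cnt L = card (\<Inter>x\<in>K. (+) x ` (L::int set))" for L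
        have cnt_eq: "cnt (lev u c') = cnt (lev v c')" if "c' \<in> {2..n} - {c}" for c'
        proof (cases "c' < c")
          case True
          then obtain t where "lev v c' = (+) t ` lev u c'" using less.IH by blast
          then show ?thesis unfolding cnt_def using cnt_translate by simp
        next
          case False
          then have "c < c'" using that by auto
          have c'1: "1 \<le> c'" "c' \<le> n" using that by auto
          have e1: "card (lev u c') = n + 1 - c'" by (rule card_lev_perm[OF u c'1(1)])
          have e2: "card (lev v c') = n + 1 - c'" by (rule card_lev_perm[OF v c'1(1)])
          have "card (lev u c') < card K" "card (lev v c') < card K"
            unfolding e1 e2 cardK using \<open>c < c'\<close> c'1 by linarith+
          then show ?thesis unfolding cnt_def using cnt_small[OF finite_lev finK] by simp
        qed
        have "Psi u n K = Psi v n K" using hyp finK Kne Kpos by blast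
        then have "(\<Sum>c'\<in>{2..n}. int (cnt (lev u c'))) = (\<Sum>c'\<in>{2..n}. int (cnt (lev v c')))"
          unfolding Psi_def cnt_def by simp
        then have "int (cnt (lev u c)) + (\<Sum>c'\<in>{2..n} - {c}. int (cnt (lev u c')))
            = int (cnt (lev v c)) + (\<Sum>c'\<in>{2..n} - {c}. int (cnt (lev v c')))"
          using c2 by (simp add: sum.remove)
        moreover have "(\<Sum>c'\<in>{2..n} - {c}. int (cnt (lev u c'))) = (\<Sum>c'\<in>{2..n} - {c}. int (cnt (lev v c')))"
          using cnt_eq by (intro sum.cong) auto
        ultimately have ceq: "cnt (lev u c) = cnt (lev v c)" by simp
        have "int n \<in> (\<Inter>x\<in>K. (+) x ` lev u c)" unfolding inter_char K_def by auto
        moreover have "finite (\<Inter>x\<in>K. (+) x ` lev u c)"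
        proof -
          obtain x0 where "x0 \<in> K" using Kne by blast
          then have "(\<Inter>x\<in>K. (+) x ` lev u c) \<subseteq> (+) x0 ` lev u c" by (rule INF_lower)
          then show ?thesis by (rule finite_subset) (simp add: finite_lev)
        qed
        ultimately have "cnt (lev u c) \<noteq> 0" unfolding cnt_def by auto
        then have "cnt (lev v c) \<noteq> 0" using ceq by simp
        then have "{y. \<forall>x\<in>K. y - x \<in> lev v c} \<noteq> {}" unfolding cnt_def inter_char by (metis card.empty)
        then obtain y where y: "\<forall>x\<in>K. y - x \<in> lev v c" by blast
        have sub: "(+) (y - int n) ` lev u c \<subseteq> lev v c"
        proof
          fix z assume "z \<in> (+) (y - int n) ` lev u c"
          then obtain a where a: "a \<in> lev u c" "z = y - int n + a" by blast
          then have "int n - a \<in> K" unfolding K_def by blast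
          then have "y - (int n - a) \<in> lev v c" using y by blast
          moreover have "z = y - (int n - a)" using a by simp
          ultimately show "z \<in> lev v c" by simp
        qed
        have "card ((+) (y - int n) ` lev u c) = card (lev v c)"
          using card_lev_perm[OF u] card_lev_perm[OF v] c1 by (simp add: card_image)
        then have "(+) (y - int n) ` lev u c = lev v c"
          using card_subset_eq[OF finite_lev sub] by simp
        then show ?thesis by (intro exI[of _ "y - int n"]) simp
      qed
    qed
  qed
  then show ?thesis unfolding levq_def using pu(3) pv(3) by simp
qed

theorem mainTheorem12:
  fixes n :: nat and u v :: "nat list"
  assumes "n \<ge> 1"
    and "u \<in> permutations_of_set {1..n}"
    and "v \<in> permutations_of_set {1..n}"
  shows "strongly_shift_equiv u v \<longleftrightarrow> super_strong_wilf u v"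
proof
  assume "strongly_shift_equiv u v"
  then show "super_strong_wilf u v" by (intro levq_ssw sse_levq)
next
  assume ss: "super_strong_wilf u v"
  note pu = perm_facts[OF assms(2)] and pv = perm_facts[OF assms(3)]
  have Phi: "Phi u n B = Phi v n B" if "finite B" "\<forall>x\<in>B. 0 \<le> x" for B
    using ssw_Phi[OF ss _ pu(5) pv(5) assms(1) that] pu(3) pv(3) by simp
  have "levq u v"
  proof (rule perm_levq[OF assms(2,3)])
    fix K :: "int set" assume K: "finite K" "K \<noteq> {}" "\<forall>x\<in>K. 0 \<le> x"
    show "Psi u n K = Psi v n K"
    proof (rule Psi_eq[OF K(1,2)])
      fix B assume "B \<subseteq> K" "B \<noteq> {}"
      then show "Phi u n B = Phi v n B" using K by (intro Phi) (auto intro: finite_subset)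
    qed
  qed
  then show "strongly_shift_equiv u v" by (intro levq_sse pu(4) pv(4))
qed


end
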